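(* Let $(X,d)$ be a finite metric space, $S\subseteq X$, $\tau\ge0$, and $L\ge 2$, and assume there exists a $1$-Lipschitz map $\varphi:X\to L_2$ satisfying $\|\varphi(x)-\varphi(y)\|_2\ge \tau/L$ for all $x,y\in S$ with $d(x,y)\in[\tau/2,3\tau]$. Then there is a $1$-Lipschitz map $h:X\to L_2$ with $$\|h(x)-h(y)\|_2\ge\frac{\tau}{9L}$$ whenever $x,y\in X$, $d(x,S)\le \frac{\tau}{6L}$, and $d(x,y)\in[\tau,2\tau]$.
   Context: $L_2$ denotes a Hilbert space; $d(x,S)=\min_{s\in S}d(x,s)$. *)

theory Defs
  imports "HOL-Analysis.Analysis"
begin

end

theory Submission imports Defs begin

lemma orth_proj_exists:
  fixes B :: "'b::real_inner set"
  assumes "finite B"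
  shows "\<exists>c\<in>span B. \<forall>b\<in>B. orthogonal (a - c) b"
  using assms
proof (induction B arbitrary: a rule: finite_induct)
  case empty then show ?case by (auto intro: span_zero)
next
  case (insert b B)
  obtain c where c: "c \<in> span B" "\<forall>x\<in>B. orthogonal (a - c) x" using insert.IH by blast
  obtain cb where cb: "cb \<in> span B" "\<forall>x\<in>B. orthogonal (b - cb) x" using insert.IH by blast
  define b' where "b' = b - cb"
  define r where "r = a - c"
  have rB: "orthogonal r y" if "y \<in> span B" for y
    using orthogonal_to_span[OF that] c(2) unfolding r_def by blast
  have b'B: "orthogonal b' y" if "y \<in> span B" for y
    using orthogonal_to_span[OF that] cb(2) unfolding b'_def by blast
  have sub: "span B \<subseteq> span (insert b B)" by (simp add: span_mono subset_insertI)
  have b'span: "b' \<in> span (insert b B)"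
    unfolding b'_def using cb(1) sub by (meson insertI1 span_base span_diff subsetD)
  define c' where "c' = c + (if b' = 0 then 0 else (r \<bullet> b' / (b' \<bullet> b')) *\<^sub>R b')"
  have c'span: "c' \<in> span (insert b B)"
    unfolding c'_def using c(1) sub b'span by (auto intro: span_add span_scale span_zero)
  define lam where "lam = (if b' = 0 then 0 else (r \<bullet> b' / (b' \<bullet> b')))"
  have ac': "a - c' = r - lam *\<^sub>R b'" unfolding c'_def r_def lam_def by auto
  have o1: "orthogonal (a - c') y" if "y \<in> span B" for y
    unfolding ac' using rB[OF that] b'B[OF that]
    by (simp add: orthogonal_clauses)
  have o2: "orthogonal (a - c') b'"
  proof (cases "b' = 0")
    case True then show ?thesis by (simp add: orthogonal_clauses)
  next
    case False
    then have "b' \<bullet> b' \<noteq> 0" by simp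
    then show ?thesis unfolding ac' orthogonal_def lam_def using False
      by (simp add: inner_diff_left)
  qed
  have "b = b' + cb" unfolding b'_def by simp
  then have o3: "orthogonal (a - c') b"
    using o2 o1[OF cb(1)] by (metis orthogonal_clauses(4))
  have "\<forall>x\<in>insert b B. orthogonal (a - c') x"
    using o3 o1 by (auto intro: span_base)
  then show ?case using c'span by blast
qed

lemma h35: "(3/5 * (n::real))\<^sup>2 = 9/25 * n\<^sup>2" unfolding power2_eq_square by simp
lemma h45: "(4/5 * \<bar>q::real\<bar>)\<^sup>2 = 16/25 * q\<^sup>2" unfolding power2_eq_square by simp

theorem lemma4p2:
  fixes X S :: "'a set" and d :: "'a \<Rightarrow> 'a \<Rightarrow> real"
    and \<tau> L :: real and \<phi> :: "'a \<Rightarrow> 'b::{real_inner, complete_space}"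
  assumes "Metric_space X d" and "finite X"
    and "\<not> (\<exists>B::'b set. finite B \<and> span B = UNIV)"
    and "S \<subseteq> X" and "\<tau> \<ge> 0" and "L \<ge> 2"
    and "\<forall>x\<in>X. \<forall>y\<in>X. norm (\<phi> x - \<phi> y) \<le> d x y"
    and "\<forall>x\<in>S. \<forall>y\<in>S. \<tau>/2 \<le> d x y \<and> d x y \<le> 3*\<tau> \<longrightarrow> norm (\<phi> x - \<phi> y) \<ge> \<tau>/L"
  shows "\<exists>h::'a \<Rightarrow> 'b.
           (\<forall>x\<in>X. \<forall>y\<in>X. norm (h x - h y) \<le> d x y) \<and>
           (\<forall>x\<in>X. \<forall>y\<in>X. (\<exists>s\<in>S. d x s \<le> \<tau>/(6*L)) \<and> \<tau> \<le> d x y \<and> d x y \<le> 2*\<tau>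
               \<longrightarrow> norm (h x - h y) \<ge> \<tau>/(9*L))"
proof -
  interpret M: Metric_space X d by fact
  have phiL: "\<And>x y. x \<in> X \<Longrightarrow> y \<in> X \<Longrightarrow> norm (\<phi> x - \<phi> y) \<le> d x y" using assms(7) by blast
  have phiS: "\<And>x y. x \<in> S \<Longrightarrow> y \<in> S \<Longrightarrow> \<tau>/2 \<le> d x y \<Longrightarrow> d x y \<le> 3*\<tau> \<Longrightarrow> norm (\<phi> x - \<phi> y) \<ge> \<tau>/L"
    using assms(8) by blast
  define B where "B = \<phi> ` X"
  have fB: "finite B" unfolding B_def using assms(2) by simp
  then obtain a where a: "a \<notin> span B" using assms(3) by blast
  obtain c where c: "c \<in> span B" "\<forall>b\<in>B. orthogonal (a - c) b" using orth_proj_exists[OF fB] by blast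
  define e0 where "e0 = a - c"
  have e0nz: "e0 \<noteq> 0" unfolding e0_def using a c(1) by auto
  define e where "e = (1 / norm e0) *\<^sub>R e0"
  have ne: "norm e = 1" unfolding e_def using e0nz by simp
  have eorth: "orthogonal v e" if "x \<in> X" "y \<in> X" "v = a' *\<^sub>R (\<phi> x - \<phi> y)" for x y v a'
  proof -
    have "\<phi> x - \<phi> y \<in> span B" unfolding B_def using that
      by (meson image_eqI span_base span_diff)
    then have "orthogonal e0 (\<phi> x - \<phi> y)"
      using orthogonal_to_span c(2) unfolding e0_def by blast
    then show ?thesis unfolding e_def that
      by (simp add: orthogonal_clauses orthogonal_commute)
  qed
  define \<delta> where "\<delta> = \<tau> / (6*L)"
  have Lpos: "L > 0" using assms(6) by simp
  have \<delta>nn: "\<delta> \<ge> 0" unfolding \<delta>_def using assms(5) Lpos by simp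
  have d3: "3 * \<delta> \<le> \<tau> / 4"
  proof -
    have "3 * \<delta> = \<tau> / (2*L)" unfolding \<delta>_def by simp
    also have "\<dots> \<le> \<tau> / 4" using assms(5,6) by (intro divide_left_mono) auto
    finally show ?thesis .
  qed
  have fS: "finite S" using assms(2,4) finite_subset by blast
  define g where "g z = (if S = {} then 0 else Min (d z ` S))" for z
  have gle: "g z \<le> d z t" if "t \<in> S" for z t
    unfolding g_def using that fS by auto
  have gge: "g z \<ge> m" if "S \<noteq> {}" "\<And>t. t \<in> S \<Longrightarrow> d z t \<ge> m" for z m
    unfolding g_def using that fS by auto
  have gat: "\<exists>t\<in>S. g z = d z t" if "S \<noteq> {}" for z
  proof -
    have "Min (d z ` S) \<in> d z ` S" using that fS by (intro Min_in) auto
    then show ?thesis unfolding g_def using that by auto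
  qed
  have glip1: "g x - g y \<le> d x y" if "x \<in> X" "y \<in> X" for x y
  proof (cases "S = {}")
    case True then show ?thesis unfolding g_def by simp
  next
    case False
    then obtain t where t: "t \<in> S" "g y = d y t" using gat by blast
    have "g x \<le> d x t" using gle t(1) by blast
    also have "\<dots> \<le> d x y + d y t" using M.triangle t(1) assms(4) that by blast
    finally show ?thesis using t by simp
  qed
  have glip: "\<bar>g x - g y\<bar> \<le> d x y" if "x \<in> X" "y \<in> X" for x y
    using glip1[OF that] glip1[OF that(2,1)] M.commute[of x y] by linarith
  define h where "h z = (3/5) *\<^sub>R \<phi> z + ((4/5) * g z) *\<^sub>R e" for z
  have hn: "(norm (h x - h y))\<^sup>2 = (9/25) * (norm (\<phi> x - \<phi> y))\<^sup>2 + (16/25) * (g x - g y)\<^sup>2"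
    if "x \<in> X" "y \<in> X" for x y
  proof -
    have eq: "h x - h y = (3/5) *\<^sub>R (\<phi> x - \<phi> y) + ((4/5) * (g x - g y)) *\<^sub>R e"
      unfolding h_def scaleR_right_diff_distrib right_diff_distrib scaleR_left_diff_distrib by (simp add: diff_add_eq add_diff_eq diff_diff_eq2)
    have o: "orthogonal ((3/5) *\<^sub>R (\<phi> x - \<phi> y)) (((4/5) * (g x - g y)) *\<^sub>R e)"
      using eorth[OF that refl, of "3/5"] by (intro orthogonal_clauses(2)) simp
    have t1: "(\<bar>3/5\<bar> * norm (\<phi> x - \<phi> y))\<^sup>2 = (9/25) * (norm (\<phi> x - \<phi> y))\<^sup>2"
      by (simp add: power_mult_distrib power2_eq_square)
    have t2: "(\<bar>(4/5) * (g x - g y)\<bar> * 1)\<^sup>2 = (16/25) * (g x - g y)\<^sup>2"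
      by (simp only: mult_1_right power2_abs power_mult_distrib) (simp add: power2_eq_square)
    show ?thesis unfolding eq norm_add_Pythagorean[OF o] norm_scaleR ne t1 t2 ..
  qed
  have part1: "norm (h x - h y) \<le> d x y" if "x \<in> X" "y \<in> X" for x y
  proof -
    have A: "(norm (\<phi> x - \<phi> y))\<^sup>2 \<le> (d x y)\<^sup>2" using phiL[OF that] by (simp add: power_mono)
    have Bq: "(g x - g y)\<^sup>2 \<le> (d x y)\<^sup>2" using glip[OF that]
      using abs_le_square_iff[of "g x - g y" "d x y"] M.nonneg[of x y] by simp
    have "(norm (h x - h y))\<^sup>2 \<le> (d x y)\<^sup>2" unfolding hn[OF that] using A Bq by linarith
    then show ?thesis using M.nonneg by (meson power2_le_imp_le)
  qed
  have part2: "norm (h x - h y) \<ge> \<tau>/(9*L)"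
    if xy: "x \<in> X" "y \<in> X" and s: "s \<in> S" "d x s \<le> \<delta>" and r: "\<tau> \<le> d x y" "d x y \<le> 2*\<tau>" for x y s
  proof -
    have sX: "s \<in> X" using s assms(4) by blast
    have tgt: "\<tau>/(9*L) \<ge> 0" using assms(5) Lpos by simp
    show ?thesis
    proof (cases "\<exists>t\<in>S. d y t < 2*\<delta>")
      case True
      then obtain t where t: "t \<in> S" "d y t < 2*\<delta>" by blast
      have tX: "t \<in> X" using t assms(4) by blast
      have "d x y \<le> d x s + d s y" using M.triangle[OF xy(1) sX xy(2)] .
      moreover have "d s y \<le> d s t + d t y" using M.triangle[OF sX tX xy(2)] .
      moreover have "d s t \<le> d s x + d x t" using M.triangle[OF sX xy(1) tX] .
      moreover have "d x t \<le> d x y + d y t" using M.triangle[OF xy(1) xy(2) tX] .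
      moreover have "d s x = d x s" "d t y = d y t" using M.commute by auto
      ultimately have st: "\<tau>/2 \<le> d s t" "d s t \<le> 3*\<tau>" using s r t d3 assms(5) by linarith+
      have P: "norm (\<phi> s - \<phi> t) \<ge> \<tau>/L" using phiS[OF s(1) t(1) st] .
      have E: "\<phi> s - \<phi> t = (\<phi> s - \<phi> x) + (\<phi> x - \<phi> y) + (\<phi> y - \<phi> t)" by simp
      have "norm (\<phi> s - \<phi> t) \<le> norm (\<phi> s - \<phi> x) + norm (\<phi> x - \<phi> y) + norm (\<phi> y - \<phi> t)"
        unfolding E using norm_triangle_ineq[of "(\<phi> s - \<phi> x) + (\<phi> x - \<phi> y)" "\<phi> y - \<phi> t"]
          norm_triangle_ineq[of "\<phi> s - \<phi> x" "\<phi> x - \<phi> y"] by linarith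
      moreover have "norm (\<phi> s - \<phi> x) \<le> d s x" using phiL sX xy by blast
      moreover have "norm (\<phi> y - \<phi> t) \<le> d y t" using phiL tX xy by blast
      moreover have "\<tau>/L = 6 * \<delta>" unfolding \<delta>_def using Lpos by simp
      ultimately have A: "norm (\<phi> x - \<phi> y) \<ge> 3 * \<delta>" using P s t \<open>d s x = d x s\<close> by linarith
      have "(3/5 * norm (\<phi> x - \<phi> y))\<^sup>2 \<le> (norm (h x - h y))\<^sup>2"
      proof -
        have "(3/5 * norm (\<phi> x - \<phi> y))\<^sup>2 = 9/25 * (norm (\<phi> x - \<phi> y))\<^sup>2"
          by (rule h35)
        then show ?thesis unfolding hn[OF xy] using zero_le_power2[of "g x - g y"] by linarith
      qed
      then have "3/5 * norm (\<phi> x - \<phi> y) \<le> norm (h x - h y)" using norm_ge_zero by (rule power2_le_imp_le)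
      moreover have "\<tau>/(9*L) \<le> 3/5 * (3 * \<delta>)" unfolding \<delta>_def using assms(5) Lpos
        by (simp add: field_simps)
      ultimately show ?thesis using A by linarith
    next
      case False
      then have "g y \<ge> 2*\<delta>" using s(1) by (intro gge) auto
      moreover have "g x \<le> \<delta>" using gle[OF s(1), of x] s by linarith
      ultimately have G: "\<bar>g x - g y\<bar> \<ge> \<delta>" by linarith
      have "(4/5 * \<bar>g x - g y\<bar>)\<^sup>2 \<le> (norm (h x - h y))\<^sup>2"
      proof -
        have "(4/5 * \<bar>g x - g y\<bar>)\<^sup>2 = 16/25 * (g x - g y)\<^sup>2"
          by (rule h45)
        then show ?thesis unfolding hn[OF xy] using zero_le_power2[of "norm (\<phi> x - \<phi> y)"] by linarith
      qed
      then have "4/5 * \<bar>g x - g y\<bar> \<le> norm (h x - h y)" using norm_ge_zero by (rule power2_le_imp_le)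
      moreover have "\<tau>/(9*L) \<le> 4/5 * \<delta>" unfolding \<delta>_def using assms(5) Lpos
        by (simp add: field_simps)
      moreover have "4/5 * \<delta> \<le> 4/5 * \<bar>g x - g y\<bar>" using G by simp
      ultimately show ?thesis by (meson order_trans)
    qed
  qed
  show ?thesis
  proof (intro exI[of _ h] conjI ballI impI)
    fix x y assume "x \<in> X" "y \<in> X"
    then show "norm (h x - h y) \<le> d x y" by (rule part1)
  next
    fix x y assume xy: "x \<in> X" "y \<in> X"
      and H: "(\<exists>s\<in>S. d x s \<le> \<tau>/(6*L)) \<and> \<tau> \<le> d x y \<and> d x y \<le> 2*\<tau>"
    then obtain s where "s \<in> S" "d x s \<le> \<delta>" unfolding \<delta>_def by blast
    with xy H show "norm (h x - h y) \<ge> \<tau>/(9*L)" using part2 by blast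
  qed
qed

end
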